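(* Let $n\geq5$ be a prime. For $i,j\in[n]$ (not necessarily distinct) write $\langle v_i,v_j\rangle^{\downarrow}=(v_{\max\{i,j\}},v_{\min\{i,j\}})$ and $\langle v_i,v_j\rangle^{\uparrow}=(v_{\min\{i,j\}},v_{\max\{i,j\}})$, and let $\langle a\rangle_n=a \bmod n$. For $h\in[n-2]$ and $m\in[n]$ define the edge sets $$S^{\downarrow}_h=\{\langle v_h,v_\ell\rangle^{\downarrow}\mid \ell\in[n-1]\},\qquad S^{\uparrow}_h=\{\langle v_h,v_\ell\rangle^{\uparrow}\mid \ell\in[n]\setminus\{n-2\}\},$$ $$D^{\downarrow}_m=\{\langle v_k,v_\ell\rangle^{\downarrow}\mid k,\ell\in[n]\setminus\{n-2\},\ \langle k+\ell\rangle_n=m\}\cup\{(v_{n-1},v_{n-2})\},$$ $$D^{\uparrow}_m=\{\langle v_k,v_\ell\rangle^{\uparrow}\mid k,\ell\in[n-1],\ \langle k+\ell\rangle_n=m\}\cup\{(v_{n-2},v_{n-1})\}.$$ Let $\mathcal{C}_{{\cal G}_4}$ be the set of all binary graphs $G=(V_n,L)$ such that, over $\mathbb{F}_2$, (a) $\sum_{e\in S^{\downarrow}_h}L(e)=0$ for all $h\in[n-2]$; (b) $\sum_{e\in D^{\downarrow}_m}L(e)=0$ for all $m\in[n]$; (c) $\sum_{e\in S^{\uparrow}_h}L(e)=0$ for all $h\in[n-2]$; (d) $\sum_{e\in D^{\uparrow}_m}L(e)=0$ for all $m\in[n]$. Then $\mathcal{C}_{{\cal G}_4}$ is an optimal binary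 double-node-erasure-correcting code, i.e., it corrects the failure of any two nodes and its redundancy equals $n^2-(n-2)^2=4n-4$.
   Context: $[n]=\{0,\ldots,n-1\}$, $V_n=\{v_0,\ldots,v_{n-1}\}$. A binary graph $G=(V_n,L)$ is a complete directed graph with self loops (edge set $V_n\times V_n$) with labeling $L:V_n\times V_n\to\{0,1\}$. A code over graphs is a set of such graphs; its dimension $k_{\cal G}$ is $\log_2$ of its size and its redundancy is $n^2-k_{\cal G}$. A failure of node $i$ is the erasure of the labels of all edges $(v_i,v_j)$ and $(v_j,v_i)$, $j\in[n]$, with the failed node known. A code is $\rho$-node-erasure-correcting if for every graph in it and every set of $\rho$ failed nodes the erased labels are uniquely determined; any such code has redundancy at least $n^2-(n-\rho)^2$, and it is called optimal if it attains this bound with equality. Double-node-erasure-correcting means $\rho=2$. *)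

theory Defs
  imports Complex_Main "HOL-Computational_Algebra.Primes"
begin

text \<open>Nodes v_0..v_{n-1} are represented by naturals 0..n-1, a directed edge (v_i,v_j)
  by the pair (i,j).  A binary graph on V_n is a labeling L of all pairs in [n] x [n];
  we represent it as a function nat => nat => bool (True = label 1) that is False
  outside [n] x [n], so that distinct graphs correspond to distinct functions.\<close>

definition binary_graphs :: "nat \<Rightarrow> (nat \<Rightarrow> nat \<Rightarrow> bool) set" where
  "binary_graphs n = {L. \<forall>i j. \<not> (i < n \<and> j < n) \<longrightarrow> \<not> L i j}"

definition parity_zero :: "(nat \<Rightarrow> nat \<Rightarrow> bool) \<Rightarrow> (nat \<times> nat) set \<Rightarrow> bool" where
  "parity_zero L S \<longleftrightarrow> even (card {e \<in> S. L (fst e) (snd e)})"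

definition edge_down :: "nat \<Rightarrow> nat \<Rightarrow> nat \<times> nat" where
  "edge_down i j = (max i j, min i j)"

definition edge_up :: "nat \<Rightarrow> nat \<Rightarrow> nat \<times> nat" where
  "edge_up i j = (min i j, max i j)"

definition S_down :: "nat \<Rightarrow> nat \<Rightarrow> (nat \<times> nat) set" where
  "S_down n h = {edge_down h l | l. l < n - 1}"

definition S_up :: "nat \<Rightarrow> nat \<Rightarrow> (nat \<times> nat) set" where
  "S_up n h = {edge_up h l | l. l < n \<and> l \<noteq> n - 2}"

definition D_down :: "nat \<Rightarrow> nat \<Rightarrow> (nat \<times> nat) set" where
  "D_down n m = {edge_down k l | k l. k < n \<and> k \<noteq> n - 2 \<and> l < n \<and> l \<noteq> n - 2 \<and> (k + l) mod n = m}
                 \<union> {(n - 1, n - 2)}"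

definition D_up :: "nat \<Rightarrow> nat \<Rightarrow> (nat \<times> nat) set" where
  "D_up n m = {edge_up k l | k l. k < n - 1 \<and> l < n - 1 \<and> (k + l) mod n = m}
               \<union> {(n - 2, n - 1)}"

definition code_G4 :: "nat \<Rightarrow> (nat \<Rightarrow> nat \<Rightarrow> bool) set" where
  "code_G4 n = {L \<in> binary_graphs n.
      (\<forall>h < n - 2. parity_zero L (S_down n h)) \<and>
      (\<forall>m < n. parity_zero L (D_down n m)) \<and>
      (\<forall>h < n - 2. parity_zero L (S_up n h)) \<and>
      (\<forall>m < n. parity_zero L (D_up n m))}"

text \<open>A code C (a set of binary graphs on V_n) is rho-node-erasure-correcting if, for every
  set F of rho failed nodes, any two codewords agreeing on all edges not incident to a
  node of F are equal (i.e. the erased labels are uniquely determined).\<close>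
definition node_erasure_correcting :: "nat \<Rightarrow> nat \<Rightarrow> (nat \<Rightarrow> nat \<Rightarrow> bool) set \<Rightarrow> bool" where
  "node_erasure_correcting n \<rho> C \<longleftrightarrow>
     (\<forall>F. F \<subseteq> {..<n} \<and> card F = \<rho> \<longrightarrow>
        (\<forall>L1 \<in> C. \<forall>L2 \<in> C.
           (\<forall>i < n. \<forall>j < n. i \<notin> F \<and> j \<notin> F \<longrightarrow> L1 i j = L2 i j) \<longrightarrow> L1 = L2))"

definition code_dimension :: "(nat \<Rightarrow> nat \<Rightarrow> bool) set \<Rightarrow> real" where
  "code_dimension C = log 2 (real (card C))"

definition redundancy :: "nat \<Rightarrow> (nat \<Rightarrow> nat \<Rightarrow> bool) set \<Rightarrow> real" where
  "redundancy n C = real (n ^ 2) - code_dimension C"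

definition optimal_node_erasure_code :: "nat \<Rightarrow> nat \<Rightarrow> (nat \<Rightarrow> nat \<Rightarrow> bool) set \<Rightarrow> bool" where
  "optimal_node_erasure_code n \<rho> C \<longleftrightarrow>
     C \<subseteq> binary_graphs n \<and> node_erasure_correcting n \<rho> C \<and>
     redundancy n C = real (n ^ 2) - real ((n - \<rho>) ^ 2)"

end

theory Submission
  imports Defs
begin


definition xv :: "nat \<Rightarrow> nat \<Rightarrow> (nat \<Rightarrow> bool) \<Rightarrow> (nat \<Rightarrow> bool) \<Rightarrow> bool" where
  "xv P Q f g = (if P = 1 then f Q else if Q = 1 then f P else if P = 0 then g Q else if Q = 0 then g P else False)"

lemma chain_eq:
  assumes "\<And>t. lo \<le> t \<Longrightarrow> t < hi \<Longrightarrow> h (Suc t) = h t" "lo \<le> i" "i \<le> hi"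
  shows "h i = h lo"
  using assms(2,3)
proof (induction i)
  case 0 then show ?case by simp
next
  case (Suc i)
  show ?case
  proof (cases "lo = Suc i")
    case True then show ?thesis by simp
  next
    case False
    then have "lo \<le> i" using Suc.prems by simp
    then show ?thesis using Suc assms(1)[of i] by simp
  qed
qed

lemma sum_single:
  assumes "even (card {t. t<n \<and> t\<noteq>Q \<and> f t})" "\<And>t. t<n \<Longrightarrow> t\<noteq>Q \<Longrightarrow> t\<noteq>P \<Longrightarrow> \<not> f t"
    "P < n" "P \<noteq> Q"
  shows "\<not> f P"
proof
  assume fP: "f P"
  have "{t. t<n \<and> t\<noteq>Q \<and> f t} = {P}" using assms fP by auto
  then show False using assms(1) by simp
qed

lemma succ_cover:
  assumes "\<And>t. 1 \<le> t \<Longrightarrow> t < n \<Longrightarrow> R (Suc t mod n)" "2 \<le> n" "s < n" "s \<noteq> 1"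
  shows "R s"
proof (cases "s = 0")
  case True
  have "R (Suc (n - 1) mod n)" using assms by (intro assms(1)) auto
  moreover have "Suc (n - 1) mod n = 0" using assms by simp
  ultimately show ?thesis using True by simp
next
  case False
  then have "R (Suc (s - 1) mod n)" using assms by (intro assms(1)) auto
  moreover have "Suc (s - 1) mod n = s" using assms False by simp
  ultimately show ?thesis by simp
qed

locale half =
  fixes n P Q :: nat and f g :: "nat \<Rightarrow> bool"
  assumes n5: "5 \<le> n" and P: "P < n" and Q: "Q < n" and PQ: "P \<noteq> Q"
  and fg01: "f 0 = g 1"
  and hs: "\<And>t. t < n \<Longrightarrow> t \<noteq> 0 \<Longrightarrow> t \<noteq> 1 \<Longrightarrow> t \<noteq> P \<Longrightarrow> t \<noteq> Q \<Longrightarrow> (Q\<noteq>1 \<and> f t) = (Q\<noteq>0 \<and> g t)"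
  and hSa: "1 \<noteq> P \<Longrightarrow> 1 \<noteq> Q \<Longrightarrow> even (card {t. t<n \<and> t\<noteq>Q \<and> f t})"
  and hSb: "0 \<noteq> P \<Longrightarrow> 0 \<noteq> Q \<Longrightarrow> even (card {t. t<n \<and> t\<noteq>Q \<and> g t})"
  and hd0: "(P \<noteq> 0 \<and> P \<noteq> 1 \<and> f 0) = xv P Q f g"
  and hd: "\<And>t. 1 \<le> t \<Longrightarrow> t < n \<Longrightarrow>
     ((t\<noteq>P \<and> P\<noteq>1 \<and> f t) \<noteq> (Suc t mod n \<noteq> P \<and> P\<noteq>0 \<and> g (Suc t mod n))) = xv P Q f g"
begin

lemma Pmod[simp]: "P mod n = P" using P by simp
lemma Qmod[simp]: "Q mod n = Q" using Q by simp

lemma caseA: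
  assumes "2 \<le> P" "P < Q"
  shows "\<not> f 1" "\<not> g 0 \<Longrightarrow> t < n \<Longrightarrow> \<not> f t \<and> \<not> g t"
proof -
  have X: "xv P Q f g = False" using assms by (simp add: xv_def)
  have f0: "\<not> f 0" using hd0 X assms by simp
  have e: "(t\<noteq>P \<and> f t) = (Suc t mod n \<noteq> P \<and> g (Suc t mod n))" if "1 \<le> t" "t < n" for t
    using hd[OF that] X assms by auto
  have e': "(t\<noteq>P \<and> f t) = (Suc t \<noteq> P \<and> g (Suc t))" if "1 \<le> t" "Suc t < n" for t
    using e[of t] that by simp
  have e'': "f t = g (Suc t)" if "1 \<le> t" "Suc t < n" "t \<noteq> P" "Suc t \<noteq> P" for t
    using e'[OF that(1,2)] that by simp
  have fg: "f t = g t" if "t<n" "t\<noteq>0" "t\<noteq>1" "t\<noteq>P" "t\<noteq>Q" for t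
    using hs[OF that] assms by auto
  have Qn: "Q < n" by (rule Q)
  have A1f: "f t = f 1" if "1 \<le> t" "t \<le> P - 1" for t
  proof (rule chain_eq[of 1 "P - 1" f t])
    fix s assume s: "1 \<le> s" "s < P - 1"
    have sn: "Suc s < n" using s assms Qn by linarith
    have "f s = g (Suc s)" using s sn assms by (intro e''; linarith)
    also have "\<dots> = f (Suc s)" using s sn assms by (intro fg[symmetric]; linarith)
    finally show "f (Suc s) = f s" by simp
  qed (use that in auto)
  have fP1: "\<not> f (P - 1)"
  proof -
    have "1 \<le> P - 1" "P - 1 < n" "P - 1 \<noteq> P" using assms Qn by auto
    then show ?thesis using e[of "P - 1"] by simp
  qed
  show f1: "\<not> f 1" using A1f[of "P - 1"] fP1 assms by simp
  assume g0: "\<not> g 0" and tn: "t < n"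
  have zA1f: "\<not> f t" if "1 \<le> t" "t \<le> P - 1" for t using A1f[OF that] f1 by simp
  have zA1g: "\<not> g t" if "2 \<le> t" "t \<le> P - 1" for t using zA1f[of t] fg[of t] that assms Qn by simp
  have g1: "\<not> g 1" using f0 fg01 by simp
  have gP1: "\<not> g (Suc P)" using e[of P] assms Qn by simp
  have A2g: "g t = g (Suc P)" if "Suc P \<le> t" "t \<le> Q" for t
  proof (rule chain_eq[of "Suc P" Q g t])
    fix s assume s: "Suc P \<le> s" "s < Q"
    have "g (Suc s) = f s" using e[of s] s assms Qn by auto
    also have "\<dots> = g s" using fg[of s] s assms Qn by simp
    finally show "g (Suc s) = g s" .
  qed (use that in auto)
  have zA2g: "\<not> g t" if "Suc P \<le> t" "t \<le> Q" for t using A2g[OF that] gP1 by simp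
  have zA2f: "\<not> f t" if "Suc P \<le> t" "t < Q" for t using zA2g[of t] fg[of t] that assms Qn by simp
  have A3: "\<not> f t \<and> \<not> g t" if "Q < t" "t < n" for t
  proof -
    have np: "n - 1 \<noteq> P" using assms Qn by linarith
    have sm: "Suc (n - 1) mod n = 0" using n5 by simp
    have "(n - 1 \<noteq> P \<and> f (n - 1)) = (Suc (n - 1) mod n \<noteq> P \<and> g (Suc (n - 1) mod n))"
      using n5 by (intro e) auto
    then have fn1: "\<not> f (n - 1)" unfolding sm using np g0 by simp
    have gn1: "\<not> g (n - 1)" using fn1 fg[of "n - 1"] that assms by simp
    have gs: "g s = g (n - 1)" if "Suc Q \<le> s" "s \<le> n - 1" for s
    proof -
      have "g (n - 1) = g (Suc Q)"
      proof (rule chain_eq[of "Suc Q" "n - 1" g "n - 1"])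
        fix r assume r: "Suc Q \<le> r" "r < n - 1"
        have rn: "Suc r < n" using r by linarith
        have "g (Suc r) = f r" using r rn assms by (intro e''[symmetric]; linarith)
        also have "\<dots> = g r" using r rn assms by (intro fg; linarith)
        finally show "g (Suc r) = g r" .
      qed (use that in auto)
      moreover have "g s = g (Suc Q)"
      proof (rule chain_eq[of "Suc Q" "n - 1" g s])
        fix r assume r: "Suc Q \<le> r" "r < n - 1"
        have rn: "Suc r < n" using r by linarith
        have "g (Suc r) = f r" using r rn assms by (intro e''[symmetric]; linarith)
        also have "\<dots> = g r" using r rn assms by (intro fg; linarith)
        finally show "g (Suc r) = g r" .
      qed (use that in auto)
      ultimately show ?thesis by simp
    qed
    have tt: "Suc Q \<le> t" "t \<le> n - 1" using that by auto
    have gt: "\<not> g t" using gs[OF tt] gn1 by simp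
    have "t \<noteq> 0" "t \<noteq> 1" "t \<noteq> P" "t \<noteq> Q" using that assms by auto
    then have "f t = g t" using fg[of t] that by simp
    then show ?thesis using gt by simp
  qed
  have fQ: "\<not> f Q"
  proof (cases "Q = n - 1")
    case True
    then show ?thesis using e[of Q] g0 assms n5 by simp
  next
    case False
    then have "Suc Q < n" using Qn by simp
    then show ?thesis using e[of Q] A3[of "Suc Q"] assms by simp
  qed
  have fo: "\<not> f t" if h: "t<n" "t\<noteq>Q" "t\<noteq>P" for t
  proof -
    consider "t = 0" | "1 \<le> t \<and> t \<le> P - 1" | "Suc P \<le> t \<and> t < Q" | "Q < t" using h by atomize_elim linarith
    then show ?thesis
    proof cases
      case 1 then show ?thesis using f0 by simp
    next
      case 2 then show ?thesis using zA1f[of t] by simp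
    next
      case 3 then show ?thesis using zA2f[of t] by simp
    next
      case 4 then show ?thesis using A3[of t] h by simp
    qed
  qed
  have ea: "even (card {t. t<n \<and> t\<noteq>Q \<and> f t})" using assms by (intro hSa) auto
  have fP: "\<not> f P" using sum_single[OF ea fo P PQ] by blast
  have go: "\<not> g t" if h: "t<n" "t\<noteq>Q" "t\<noteq>P" for t
  proof -
    consider "t = 0" | "t = 1" | "2 \<le> t \<and> t \<le> P - 1" | "Suc P \<le> t \<and> t < Q" | "Q < t" using h by atomize_elim linarith
    then show ?thesis
    proof cases
      case 1 then show ?thesis using g0 by simp
    next
      case 2 then show ?thesis using g1 by simp
    next
      case 3 then show ?thesis using zA1g[of t] by simp
    next
      case 4 then show ?thesis using zA2g[of t] by simp
    next
      case 5 then show ?thesis using A3[of t] h by simp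
    qed
  qed
  have eb: "even (card {t. t<n \<and> t\<noteq>Q \<and> g t})" using assms by (intro hSb) auto
  have gP: "\<not> g P" using sum_single[OF eb go P PQ] by blast
  have gQ: "\<not> g Q" using zA2g[of Q] assms by simp
  show "\<not> f t \<and> \<not> g t"
    using fo[OF tn] go[OF tn] fP gP fQ gQ by blast
qed

lemma caseB:
  assumes "2 \<le> Q" "Q < P"
  shows "\<not> g 0" "\<not> f 1 \<Longrightarrow> t < n \<Longrightarrow> \<not> f t \<and> \<not> g t"
proof -
  have X: "xv P Q f g = False" using assms by (simp add: xv_def)
  have f0: "\<not> f 0" using hd0 X assms by simp
  have e: "(t\<noteq>P \<and> f t) = (Suc t mod n \<noteq> P \<and> g (Suc t mod n))" if "1 \<le> t" "t < n" for t
    using hd[OF that] X assms by auto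
  have e': "(t\<noteq>P \<and> f t) = (Suc t \<noteq> P \<and> g (Suc t))" if "1 \<le> t" "Suc t < n" for t
    using e[of t] that by simp
  have e'': "f t = g (Suc t)" if "1 \<le> t" "Suc t < n" "t \<noteq> P" "Suc t \<noteq> P" for t
    using e'[OF that(1,2)] that by simp
  have fg: "f t = g t" if "t<n" "t\<noteq>0" "t\<noteq>1" "t\<noteq>P" "t\<noteq>Q" for t
    using hs[OF that] assms by auto
  have Pn: "P < n" by (rule P)
  have gsP: "\<not> g (Suc P mod n)"
  proof -
    have "Suc P mod n \<noteq> P"
    proof (cases "Suc P = n")
      case True then show ?thesis using assms by simp
    next
      case False then show ?thesis using Pn by simp
    qed
    then show ?thesis using e[of P] Pn assms by simp
  qed
  have B3: "\<not> f t \<and> \<not> g t" "\<not> g 0" if "P < t" "t < n" for t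
  proof -
    have np: "n - 1 \<noteq> Q" using assms Pn by linarith
    have PS: "Suc P < n" using that by simp
    have gSP: "\<not> g (Suc P)" using gsP PS by simp
    have gs: "g s = g (Suc P)" if "Suc P \<le> s" "s \<le> n - 1" for s
    proof (rule chain_eq[of "Suc P" "n - 1" g s])
      fix r assume r: "Suc P \<le> r" "r < n - 1"
      have rn: "Suc r < n" using r by linarith
      have "g (Suc r) = f r" using r rn assms by (intro e''[symmetric]; linarith)
      also have "\<dots> = g r" using r rn assms by (intro fg; linarith)
      finally show "g (Suc r) = g r" .
    qed (use that in auto)
    have gn1: "\<not> g (n - 1)" using gs[of "n - 1"] gSP PS by simp
    have "n - 1 \<noteq> 0" "n - 1 \<noteq> 1" "n - 1 \<noteq> P" "n - 1 \<noteq> Q" using that assms n5 by auto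
    then have fn1: "\<not> f (n - 1)" using fg[of "n - 1"] gn1 n5 by simp
    have sm: "Suc (n - 1) mod n = 0" using n5 by simp
    have "(n - 1 \<noteq> P \<and> f (n - 1)) = (Suc (n - 1) mod n \<noteq> P \<and> g (Suc (n - 1) mod n))"
      using n5 by (intro e) auto
    then show "\<not> g 0" unfolding sm using fn1 assms by simp
    have tt: "Suc P \<le> t" "t \<le> n - 1" using that by auto
    have gt: "\<not> g t" using gs[OF tt] gSP by simp
    have "t \<noteq> 0" "t \<noteq> 1" "t \<noteq> P" "t \<noteq> Q" using that assms by auto
    then have "f t = g t" using fg[of t] that by simp
    then show "\<not> f t \<and> \<not> g t" using gt by simp
  qed
  show g0: "\<not> g 0"
  proof (cases "P = n - 1")
    case True
    then have "Suc P mod n = 0" using Pn by simp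
    then show ?thesis using gsP by simp
  next
    case False
    then show ?thesis using B3(2)[of "Suc P"] Pn by simp
  qed
  assume f1: "\<not> f 1" and tn: "t < n"
  have g1: "\<not> g 1" using f0 fg01 by simp
  have g2: "\<not> g 2" using e'[of 1] f1 assms Pn by (simp add: numeral_2_eq_2)
  have B1g: "g t = g 2" if "2 \<le> t" "t \<le> Q" for t
  proof (rule chain_eq[of 2 Q g t])
    fix s assume s: "2 \<le> s" "s < Q"
    have sn: "Suc s < n" using s assms Pn by linarith
    have "g (Suc s) = f s" using s sn assms by (intro e''[symmetric]; linarith)
    also have "\<dots> = g s" using s sn assms by (intro fg; linarith)
    finally show "g (Suc s) = g s" .
  qed (use that in auto)
  have zB1g: "\<not> g t" if "2 \<le> t" "t \<le> Q" for t using B1g[OF that] g2 by simp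
  have zB1f: "\<not> f t" if "2 \<le> t" "t < Q" for t using zB1g[of t] fg[of t] that assms Pn by simp
  have fP1: "\<not> f (P - 1)"
  proof -
    have "1 \<le> P - 1" "P - 1 < n" "P - 1 \<noteq> P" "Suc (P - 1) = P" using assms Pn by auto
    then show ?thesis using e[of "P - 1"] by simp
  qed
  have B2f: "f t = f (P - 1)" if "Q \<le> t" "t \<le> P - 1" for t
  proof -
    have "f (P - 1) = f Q"
    proof (rule chain_eq[of Q "P - 1" f "P - 1"])
      fix s assume s: "Q \<le> s" "s < P - 1"
      have sn: "Suc s < n" using s assms Pn by linarith
      have "f (Suc s) = g (Suc s)" using s sn assms by (intro fg; linarith)
      also have "\<dots> = f s" using s sn assms by (intro e''[symmetric]; linarith)
      finally show "f (Suc s) = f s" .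
    qed (use assms in auto)
    moreover have "f t = f Q"
    proof (rule chain_eq[of Q "P - 1" f t])
      fix s assume s: "Q \<le> s" "s < P - 1"
      have sn: "Suc s < n" using s assms Pn by linarith
      have "f (Suc s) = g (Suc s)" using s sn assms by (intro fg; linarith)
      also have "\<dots> = f s" using s sn assms by (intro e''[symmetric]; linarith)
      finally show "f (Suc s) = f s" .
    qed (use that in auto)
    ultimately show ?thesis by simp
  qed
  have zB2f: "\<not> f t" if "Q \<le> t" "t \<le> P - 1" for t using B2f[OF that] fP1 by simp
  have zB2g: "\<not> g t" if "Q < t" "t < P" for t using zB2f[of t] fg[of t] that assms Pn by simp
  have fo: "\<not> f t" if h: "t<n" "t\<noteq>Q" "t\<noteq>P" for t
  proof -
    consider "t = 0" | "t = 1" | "2 \<le> t \<and> t < Q" | "Q \<le> t \<and> t \<le> P - 1" | "P < t" using h by atomize_elim linarith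
    then show ?thesis
    proof cases
      case 1 then show ?thesis using f0 by simp
    next
      case 2 then show ?thesis using f1 by simp
    next
      case 3 then show ?thesis using zB1f[of t] by simp
    next
      case 4 then show ?thesis using zB2f[of t] by simp
    next
      case 5 then show ?thesis using B3(1)[of t] h by simp
    qed
  qed
  have ea: "even (card {t. t<n \<and> t\<noteq>Q \<and> f t})" using assms by (intro hSa) auto
  have fP: "\<not> f P" using sum_single[OF ea fo P PQ] by blast
  have go: "\<not> g t" if h: "t<n" "t\<noteq>Q" "t\<noteq>P" for t
  proof -
    consider "t = 0" | "t = 1" | "2 \<le> t \<and> t \<le> Q" | "Q < t \<and> t < P" | "P < t" using h by atomize_elim linarith
    then show ?thesis
    proof cases
      case 1 then show ?thesis using g0 by simp
    next
      case 2 then show ?thesis using g1 by simp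
    next
      case 3 then show ?thesis using zB1g[of t] by simp
    next
      case 4 then show ?thesis using zB2g[of t] by simp
    next
      case 5 then show ?thesis using B3(1)[of t] h by simp
    qed
  qed
  have eb: "even (card {t. t<n \<and> t\<noteq>Q \<and> g t})" using assms by (intro hSb) auto
  have gP: "\<not> g P" using sum_single[OF eb go P PQ] by blast
  have gQ: "\<not> g Q" using zB1g[of Q] assms by simp
  have fQ: "\<not> f Q" using zB2f[of Q] assms by simp
  show "\<not> f t \<and> \<not> g t"
    using fo[OF tn] go[OF tn] fP gP fQ gQ by blast
qed

lemma caseP1:
  assumes "P = 1" "2 \<le> Q"
  shows "\<not> g 0" "\<not> f 1 \<Longrightarrow> t < n \<Longrightarrow> \<not> f t \<and> \<not> g t"
proof -
  have X: "xv P Q f g = f Q" using assms by (simp add: xv_def)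
  have fQ: "\<not> f Q" using hd0 X assms by simp
  have gz: "\<not> g s" if "s < n" "s \<noteq> 1" for s
  proof (rule succ_cover[where R="\<lambda>s. \<not> g s" and n=n])
    fix t assume t: "1 \<le> t" "t < n"
    have "Suc t mod n \<noteq> 1"
    proof (cases "Suc t = n")
      case True then show ?thesis using n5 by simp
    next
      case False then show ?thesis using t by simp
    qed
    then show "\<not> g (Suc t mod n)" using hd[OF t] X fQ assms by simp
  qed (use n5 that in auto)
  show "\<not> g 0" using gz[of 0] n5 by simp
  have fg: "f t = g t" if "t<n" "t\<noteq>0" "t\<noteq>1" "t\<noteq>P" "t\<noteq>Q" for t
    using hs[OF that] assms by auto
  have eb: "even (card {t. t<n \<and> t\<noteq>Q \<and> g t})" using assms by (intro hSb) auto
  have g1: "\<not> g 1" using sum_single[OF eb, of 1] gz assms n5 by auto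
  have f0: "\<not> f 0" using g1 fg01 by simp
  assume f1: "\<not> f 1" and tn: "t < n"
  show "\<not> f t \<and> \<not> g t"
  proof (cases "t = 0 \<or> t = 1 \<or> t = Q")
    case True then show ?thesis using f0 f1 fQ g1 gz[of t] tn by auto
  next
    case False then show ?thesis using fg[of t] gz[of t] tn assms by auto
  qed
qed

lemma caseP0:
  assumes "P = 0" "2 \<le> Q"
  shows "\<not> f 1" "\<not> g 0 \<Longrightarrow> t < n \<Longrightarrow> \<not> f t \<and> \<not> g t"
proof -
  have X: "xv P Q f g = g Q" using assms by (simp add: xv_def)
  have gQ: "\<not> g Q" using hd0 X assms by simp
  have fz: "\<not> f t" if "1 \<le> t" "t < n" for t using hd[OF that] X gQ assms that by auto
  show "\<not> f 1" using fz[of 1] n5 by simp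
  have fg: "f t = g t" if "t<n" "t\<noteq>0" "t\<noteq>1" "t\<noteq>P" "t\<noteq>Q" for t
    using hs[OF that] assms by auto
  have ea: "even (card {t. t<n \<and> t\<noteq>Q \<and> f t})" using assms by (intro hSa) auto
  have f0: "\<not> f 0" using sum_single[OF ea, of 0] fz assms n5 by auto
  have g1: "\<not> g 1" using f0 fg01 by simp
  assume g0: "\<not> g 0" and tn: "t < n"
  show "\<not> f t \<and> \<not> g t"
  proof (cases "t = 0 \<or> t = 1 \<or> t = Q")
    case True then show ?thesis using f0 fz[of t] gQ g1 g0 tn assms by auto
  next
    case False then show ?thesis using fg[of t] fz[of t] tn assms by auto
  qed
qed

lemma caseQ1:
  assumes "Q = 1" "2 \<le> P"
  shows "P \<noteq> n - 1 \<Longrightarrow> \<not> f 1" "P = n - 1 \<Longrightarrow> f 1 = g 0"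
    "\<not> f 1 \<Longrightarrow> \<not> g 0 \<Longrightarrow> t < n \<Longrightarrow> \<not> f t \<and> \<not> g t"
proof -
  have X: "xv P Q f g = f P" using assms by (simp add: xv_def)
  have gz: "\<not> g t" if "t < n" "t\<noteq>0" "t\<noteq>1" "t\<noteq>P" for t
    using hs[of t] that assms by auto
  have f0: "f 0 = f P" using hd0 X assms by simp
  have Pn: "P < n" by (rule P)
  have eP: "g (Suc P mod n) = f P"
  proof -
    have "Suc P mod n \<noteq> P"
    proof (cases "Suc P = n")
      case True then show ?thesis using assms by simp
    next
      case False then show ?thesis using Pn by simp
    qed
    then show ?thesis using hd[of P] X Pn assms by auto
  qed
  have fPz: "P \<noteq> n - 1 \<Longrightarrow> \<not> f P"
  proof -
    assume "P \<noteq> n - 1"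
    then have "Suc P < n" using Pn by simp
    then show "\<not> f P" using eP gz[of "Suc P"] assms by simp
  qed
  have fPg: "P = n - 1 \<Longrightarrow> f P = g 0"
  proof -
    assume "P = n - 1"
    then have "Suc P mod n = 0" using Pn by simp
    then show "f P = g 0" using eP by simp
  qed
  have f1: "f 1 = f P"
  proof (cases "P = 2")
    case True
    then have "(f 1 \<noteq> False) = f P" using hd[of 1] X n5 by (simp add: numeral_2_eq_2)
    then show ?thesis by simp
  next
    case False
    have "\<not> g 2" using gz[of 2] False n5 by simp
    then show ?thesis using hd[of 1] X n5 False assms by (simp add: numeral_2_eq_2)
  qed
  show "P \<noteq> n - 1 \<Longrightarrow> \<not> f 1" using f1 fPz by simp
  show "P = n - 1 \<Longrightarrow> f 1 = g 0" using f1 fPg by simp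
  assume f1z: "\<not> f 1" and g0: "\<not> g 0" and tn: "t < n"
  have fP: "\<not> f P" using f1 f1z by simp
  have fo: "\<not> f t" if "1 \<le> t" "t < n" "t \<noteq> P" for t
  proof -
    have h: "((t\<noteq>P \<and> f t) \<noteq> (Suc t mod n \<noteq> P \<and> g (Suc t mod n))) = f P" using hd[OF that(1,2)] X assms by simp
    have "\<not> (Suc t mod n \<noteq> P \<and> g (Suc t mod n))"
    proof (cases "Suc t = n")
      case True then show ?thesis using g0 by simp
    next
      case False
      then have "Suc t < n" using that by simp
      then show ?thesis using gz[of "Suc t"] that by auto
    qed
    then show ?thesis using h fP that by simp
  qed
  have g1: "\<not> g 1" using f0 fP fg01 by simp
  have eb: "even (card {t. t<n \<and> t\<noteq>Q \<and> g t})" using assms by (intro hSb) auto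
  have gP: "\<not> g P" using sum_single[OF eb, of P] gz g0 assms Pn by auto
  show "\<not> f t \<and> \<not> g t"
  proof (cases "t = 0 \<or> t = 1 \<or> t = P")
    case True then show ?thesis using f0 fP f1z g0 g1 gP by auto
  next
    case False then show ?thesis using fo[of t] gz[of t] tn by auto
  qed
qed

lemma caseQ0:
  assumes "Q = 0" "2 \<le> P"
  shows "P \<noteq> 2 \<Longrightarrow> \<not> g 0" "P = 2 \<Longrightarrow> f 1 = g 0"
    "\<not> f 1 \<Longrightarrow> \<not> g 0 \<Longrightarrow> t < n \<Longrightarrow> \<not> f t \<and> \<not> g t"
proof -
  have X: "xv P Q f g = g P" using assms by (simp add: xv_def)
  have fz: "\<not> f t" if "t < n" "t\<noteq>0" "t\<noteq>1" "t\<noteq>P" for t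
    using hs[of t] that assms by auto
  have f0: "f 0 = g P" using hd0 X assms by simp
  have Pn: "P < n" by (rule P)
  have eP1: "f (P - 1) = g P"
  proof -
    have "1 \<le> P - 1" "P - 1 < n" "P - 1 \<noteq> P" "Suc (P - 1) = P" using assms Pn by auto
    then show ?thesis using hd[of "P - 1"] X Pn assms by auto
  qed
  have g0P: "g 0 = g P"
  proof -
    have sm: "Suc (n - 1) mod n = 0" using n5 by simp
    have h: "((n - 1\<noteq>P \<and> f (n - 1)) \<noteq> (Suc (n - 1) mod n \<noteq> P \<and> g (Suc (n - 1) mod n))) = g P"
      using hd[of "n - 1"] X assms n5 by simp
    have "n - 1 \<noteq> 1" "n - 1 \<noteq> 0" "n - 1 < n" using n5 by auto
    then have "\<not> (n - 1\<noteq>P \<and> f (n - 1))" using fz[of "n - 1"] by auto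
    then show ?thesis using h assms unfolding sm by auto
  qed
  show "P \<noteq> 2 \<Longrightarrow> \<not> g 0"
  proof -
    assume "P \<noteq> 2"
    then have "\<not> f (P - 1)" using fz[of "P - 1"] assms Pn by simp
    then show ?thesis using eP1 g0P by simp
  qed
  show "P = 2 \<Longrightarrow> f 1 = g 0" using eP1 g0P by simp
  assume f1: "\<not> f 1" and g0: "\<not> g 0" and tn: "t < n"
  have gP: "\<not> g P" using g0 g0P by simp
  have f0z: "\<not> f 0" using f0 gP by simp
  have g1: "\<not> g 1" using f0z fg01 by simp
  have go: "\<not> g s" if "2 \<le> s" "s < n" "s \<noteq> P" for s
  proof -
    have h: "((s - 1\<noteq>P \<and> f (s - 1)) \<noteq> (Suc (s - 1) mod n \<noteq> P \<and> g (Suc (s - 1) mod n))) = g P"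
    proof -
      have "1 \<le> s - 1" "s - 1 < n" using that by auto
      then show ?thesis using hd[of "s - 1"] X that assms by simp
    qed
    have "Suc (s - 1) mod n = s" using that by simp
    moreover have "\<not> (s - 1\<noteq>P \<and> f (s - 1))"
    proof -
      have "s - 1 < n" "s - 1 \<noteq> 0" using that by auto
      then show ?thesis using fz[of "s - 1"] f1 by (cases "s - 1 = 1") auto
    qed
    ultimately show ?thesis using h gP that by auto
  qed
  have ea: "even (card {t. t<n \<and> t\<noteq>Q \<and> f t})" using assms by (intro hSa) auto
  have fP: "\<not> f P" using sum_single[OF ea, of P] fz f1 assms Pn by auto
  show "\<not> f t \<and> \<not> g t"
  proof (cases "t = 0 \<or> t = 1 \<or> t = P")
    case True then show ?thesis using f0z f1 fP g0 g1 gP by auto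
  next
    case False then show ?thesis using fz[of t] go[of t] tn by auto
  qed
qed

lemma case01:
  assumes "P = 0" "Q = 1"
  shows "\<not> f 1" "\<not> g 0 \<Longrightarrow> t < n \<Longrightarrow> \<not> f t \<and> \<not> g t"
proof -
  have X: "xv P Q f g = f 0" using assms by (simp add: xv_def)
  have f0: "\<not> f 0" using hd0 X assms by simp
  have fz: "\<not> f t" if "1 \<le> t" "t < n" for t using hd[OF that] X f0 assms that by auto
  have gz: "\<not> g t" if "t < n" "t\<noteq>0" "t\<noteq>1" for t using hs[of t] that assms by auto
  show "\<not> f 1" using fz[of 1] n5 by simp
  have g1: "\<not> g 1" using f0 fg01 by simp
  assume g0: "\<not> g 0" and tn: "t < n"
  show "\<not> f t \<and> \<not> g t" using f0 fz[of t] gz[of t] g0 g1 tn by (cases "t = 0"; cases "t = 1") auto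
qed

lemma case10:
  assumes "P = 1" "Q = 0"
  shows "\<not> g 0" "\<not> f 1 \<Longrightarrow> t < n \<Longrightarrow> \<not> f t \<and> \<not> g t"
proof -
  have X: "xv P Q f g = f 0" using assms by (simp add: xv_def)
  have f0: "\<not> f 0" using hd0 X assms by simp
  have fz: "\<not> f t" if "t < n" "t\<noteq>0" "t\<noteq>1" for t using hs[of t] that assms by auto
  have gz: "\<not> g s" if "s < n" "s \<noteq> 1" for s
  proof (rule succ_cover[where R="\<lambda>s. \<not> g s" and n=n])
    fix t assume t: "1 \<le> t" "t < n"
    have "Suc t mod n \<noteq> 1"
    proof (cases "Suc t = n")
      case True then show ?thesis using n5 by simp
    next
      case False then show ?thesis using t by simp
    qed
    then show "\<not> g (Suc t mod n)" using hd[OF t] X f0 assms by simp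
  qed (use n5 that in auto)
  show "\<not> g 0" using gz[of 0] n5 by simp
  have g1: "\<not> g 1" using f0 fg01 by simp
  assume f1: "\<not> f 1" and tn: "t < n"
  show "\<not> f t \<and> \<not> g t" using f0 f1 fz[of t] gz[of t] g1 tn by (cases "t = 0"; cases "t = 1") auto
qed

lemma zero:
  assumes "\<not> f 1" "\<not> g 0" "t < n"
  shows "\<not> f t \<and> \<not> g t"
proof -
  consider "2 \<le> P \<and> P < Q" | "2 \<le> Q \<and> Q < P" | "P = 1 \<and> 2 \<le> Q" | "P = 0 \<and> 2 \<le> Q"
    | "Q = 1 \<and> 2 \<le> P" | "Q = 0 \<and> 2 \<le> P" | "P = 0 \<and> Q = 1" | "P = 1 \<and> Q = 0"
    using PQ by atomize_elim linarith
  then show ?thesis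
  proof cases
    case 1 then show ?thesis using caseA(2) assms by blast
  next
    case 2 then show ?thesis using caseB(2) assms by blast
  next
    case 3 then show ?thesis using caseP1(2) assms by blast
  next
    case 4 then show ?thesis using caseP0(2) assms by blast
  next
    case 5 then show ?thesis using caseQ1(3) assms by blast
  next
    case 6 then show ?thesis using caseQ0(3) assms by blast
  next
    case 7 then show ?thesis using case01(2) assms by blast
  next
    case 8 then show ?thesis using case10(2) assms by blast
  qed
qed

lemma kA: "(2\<le>P \<and> P<Q) \<or> P=0 \<or> (Q=1 \<and> P\<noteq>n-1) \<Longrightarrow> \<not> f 1"
proof -
  assume h: "(2\<le>P \<and> P<Q) \<or> P=0 \<or> (Q=1 \<and> P\<noteq>n-1)"
  consider "2\<le>P \<and> P<Q" | "P = 0 \<and> 2 \<le> Q" | "P = 0 \<and> Q = 1" | "Q = 1 \<and> 2 \<le> P \<and> P \<noteq> n - 1"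
    using h PQ by atomize_elim linarith
  then show ?thesis
  proof cases
    case 1 then show ?thesis using caseA(1) by blast
  next
    case 2 then show ?thesis using caseP0(1) by blast
  next
    case 3 then show ?thesis using case01(1) by blast
  next
    case 4 then show ?thesis using caseQ1(1) by blast
  qed
qed

lemma kB: "(2\<le>Q \<and> Q<P) \<or> P=1 \<or> (Q=0 \<and> P\<noteq>2) \<Longrightarrow> \<not> g 0"
proof -
  assume h: "(2\<le>Q \<and> Q<P) \<or> P=1 \<or> (Q=0 \<and> P\<noteq>2)"
  consider "2\<le>Q \<and> Q<P" | "P = 1 \<and> 2 \<le> Q" | "P = 1 \<and> Q = 0" | "Q = 0 \<and> 2 \<le> P \<and> P \<noteq> 2"
    using h PQ by atomize_elim linarith
  then show ?thesis
  proof cases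
    case 1 then show ?thesis using caseB(1) by blast
  next
    case 2 then show ?thesis using caseP1(1) by blast
  next
    case 3 then show ?thesis using case10(1) by blast
  next
    case 4 then show ?thesis using caseQ0(1) by blast
  qed
qed

lemma kE: "(Q=1 \<and> P=n-1) \<or> (Q=0 \<and> P=2) \<Longrightarrow> f 1 = g 0"
  using caseQ1(2) caseQ0(2) n5 by auto

end

lemma halves_zero:
  assumes D: "half n P Q f g" and U: "half n Q P F G" and "F 1 = f 1" "G 0 = g 0" "t < n"
  shows "\<not> f t \<and> \<not> g t \<and> \<not> F t \<and> \<not> G t"
proof -
  have n5: "5 \<le> n" and PQ: "P \<noteq> Q" using D unfolding half_def by auto
  have ab: "\<not> f 1 \<and> \<not> g 0"
  proof -
    consider "2 \<le> P \<and> P < Q" | "2 \<le> Q \<and> Q < P" | "P = 1 \<and> 2 \<le> Q" | "P = 0 \<and> 2 \<le> Q"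
      | "Q = 1 \<and> 2 \<le> P" | "Q = 0 \<and> 2 \<le> P" | "P = 0 \<and> Q = 1" | "P = 1 \<and> Q = 0"
      using PQ by atomize_elim linarith
    then show ?thesis
    proof cases
      case 1 then show ?thesis using half.kA[OF D] half.kB[OF U] assms by auto
    next
      case 2 then show ?thesis using half.kB[OF D] half.kA[OF U] assms by auto
    next
      case 3 then show ?thesis using half.kB[OF D] half.kA[OF U] half.kE[OF U] assms by auto
    next
      case 4 then show ?thesis using half.kA[OF D] half.kB[OF U] half.kE[OF U] assms by auto
    next
      case 5 then show ?thesis using half.kA[OF D] half.kE[OF D] half.kB[OF U] assms by auto
    next
      case 6 then show ?thesis using half.kB[OF D] half.kE[OF D] half.kA[OF U] assms by auto
    next
      case 7 then show ?thesis using half.kA[OF D] half.kB[OF U] assms by auto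
    next
      case 8 then show ?thesis using half.kB[OF D] half.kA[OF U] assms by auto
    qed
  qed
  then show ?thesis using half.zero[OF D] half.zero[OF U] assms by auto
qed


lemma par2:
  assumes "cu \<Longrightarrow> cv \<Longrightarrow> u \<noteq> v"
  shows "even (card {p. (p = u \<and> cu \<or> p = v \<and> cv) \<and> M p}) \<longleftrightarrow> ((cu \<and> M u) = (cv \<and> M v))"
proof -
  have eq: "{p. (p = u \<and> cu \<or> p = v \<and> cv) \<and> M p} =
     (if cu \<and> M u then {u} else {}) \<union> (if cv \<and> M v then {v} else {})" by auto
  show ?thesis unfolding eq using assms by (cases "cu \<and> M u"; cases "cv \<and> M v") auto
qed

lemma par3:
  assumes "cu \<Longrightarrow> cv \<Longrightarrow> u \<noteq> v" "cu \<Longrightarrow> u \<noteq> w" "cv \<Longrightarrow> v \<noteq> w"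
  shows "even (card {p. (p = u \<and> cu \<or> p = v \<and> cv \<or> p = w) \<and> M p}) \<longleftrightarrow> (((cu \<and> M u) \<noteq> (cv \<and> M v)) = M w)"
proof -
  have eq: "{p. (p = u \<and> cu \<or> p = v \<and> cv \<or> p = w) \<and> M p} =
     (if cu \<and> M u then {u} else {}) \<union> (if cv \<and> M v then {v} else {}) \<union> (if M w then {w} else {})" by auto
  show ?thesis unfolding eq using assms by (cases "cu \<and> M u"; cases "cv \<and> M v"; cases "M w") auto
qed

lemma mod_cancel:
  fixes c x y n :: nat
  assumes "x < n" "y < n" "(c + x) mod n = (c + y) mod n" shows "x = y"
proof -
  have *: "x = y" if "x < n" "y < n" "(c + x) mod n = (c + y) mod n" "x \<le> y" for x y
  proof -
    have "n dvd (c + y) - (c + x)" using that mod_eq_dvd_iff_nat[of "c + x" "c + y" n] by simp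
    then have "n dvd y - x" by simp
    then show "x = y" using that by (metis diff_diff_cancel diff_le_self dvd_imp_le le_antisym
          less_imp_diff_less not_less zero_less_diff)
  qed
  show ?thesis using *[of x y] *[of y x] assms by (cases "x \<le> y") auto
qed

lemma half_from_edges:
  fixes e :: "nat \<Rightarrow> nat \<Rightarrow> nat \<times> nat" and M :: "nat \<times> nat \<Rightarrow> bool" and pi :: "nat \<Rightarrow> nat"
  assumes n5: "5 \<le> n" and ab: "a < n" "b < n" "a \<noteq> b"
  and e_sym: "\<And>x y. e x y = e y x"
  and e_inj: "\<And>x y x' y'. e x y = e x' y' \<Longrightarrow> (x = x' \<and> y = y') \<or> (x = y' \<and> y = x')"
  and cSD: "cS \<noteq> cD" "cS < n" "cD < n" "\<And>h. h < n - 2 \<longleftrightarrow> (h < n \<and> h \<noteq> cS \<and> h \<noteq> cD)"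
  and supp: "\<And>x y. M (e x y) \<Longrightarrow> x = a \<or> x = b \<or> y = a \<or> y = b"
  and cs: "\<And>h. h < n - 2 \<Longrightarrow> even (card {p \<in> {e h l | l. l < n \<and> l \<noteq> cS}. M p})"
  and cd: "\<And>m. m < n \<Longrightarrow> even (card {p \<in> {e k l | k l. k < n \<and> k \<noteq> cD \<and> l < n \<and> l \<noteq> cD \<and> (k + l) mod n = m} \<union> {e cS cD}. M p})"
  and pir: "\<And>t. t < n \<Longrightarrow> pi t < n" and piinj: "inj_on pi {..<n}" and pis: "\<And>l. l < n \<Longrightarrow> \<exists>t<n. pi t = l"
  and pi0: "pi 0 = b" and pi1: "pi 1 = a"
  and pistep: "\<And>t. t < n \<Longrightarrow> (b + pi (Suc t mod n)) mod n = (a + pi t) mod n"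
  and PQ: "P < n" "Q < n" "pi P = cD" "pi Q = cS"
  shows "half n P Q (\<lambda>t. M (e a (pi t))) (\<lambda>t. M (e b (pi t)))"
proof -
  define f where "f = (\<lambda>t. M (e a (pi t)))"
  define g where "g = (\<lambda>t. M (e b (pi t)))"
  have pieq: "pi t = pi t' \<longleftrightarrow> t = t'" if "t < n" "t' < n" for t t'
    using piinj that by (auto simp: inj_on_def)
  have pia: "pi t = a \<longleftrightarrow> t = 1" if "t < n" for t using pieq[of t 1] pi1 that n5 by auto
  have pib: "pi t = b \<longleftrightarrow> t = 0" if "t < n" for t using pieq[of t 0] pi0 that n5 by auto
  have piD: "pi t = cD \<longleftrightarrow> t = P" if "t < n" for t using pieq[of t P] PQ that by auto
  have piS: "pi t = cS \<longleftrightarrow> t = Q" if "t < n" for t using pieq[of t Q] PQ that by auto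
  have aS: "a = cS \<longleftrightarrow> Q = 1" using piS[of 1] pi1 n5 by auto
  have aD: "a = cD \<longleftrightarrow> P = 1" using piD[of 1] pi1 n5 by auto
  have bS: "b = cS \<longleftrightarrow> Q = 0" using piS[of 0] pi0 n5 by auto
  have bD: "b = cD \<longleftrightarrow> P = 0" using piD[of 0] pi0 n5 by auto
  have PneQ: "P \<noteq> Q" using PQ cSD by auto
  have wX: "M (e cS cD) = xv P Q f g"
  proof -
    have "M (e cS cD) = f Q" if "P = 1" using that aD PQ e_sym unfolding f_def by simp
    moreover have "M (e cS cD) = f P" if "Q = 1" using that aS PQ unfolding f_def by simp
    moreover have "M (e cS cD) = g Q" if "P = 0" using that bD PQ e_sym unfolding g_def by simp
    moreover have "M (e cS cD) = g P" if "Q = 0" using that bS PQ unfolding g_def by simp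
    moreover have "\<not> M (e cS cD)" if "P \<noteq> 1" "Q \<noteq> 1" "P \<noteq> 0" "Q \<noteq> 0"
      using supp[of cS cD] that aD aS bD bS by auto
    ultimately show ?thesis unfolding xv_def by auto
  qed
  have sumS: "even (card {t. t < n \<and> t \<noteq> Q \<and> M (e c (pi t))})" if c: "c < n - 2" for c
  proof -
    have eq: "{p \<in> {e c l |l. l < n \<and> l \<noteq> cS}. M p} = (\<lambda>t. e c (pi t)) ` {t. t < n \<and> t \<noteq> Q \<and> M (e c (pi t))}"
    proof (rule set_eqI, rule iffI)
      fix p assume "p \<in> {p \<in> {e c l |l. l < n \<and> l \<noteq> cS}. M p}"
      then obtain l where l: "p = e c l" "l < n" "l \<noteq> cS" "M p" by auto
      obtain t where t: "t < n" "pi t = l" using pis[OF l(2)] by auto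
      have "t \<noteq> Q" using t l PQ by auto
      then show "p \<in> (\<lambda>t. e c (pi t)) ` {t. t < n \<and> t \<noteq> Q \<and> M (e c (pi t))}" using t l by auto
    next
      fix p assume "p \<in> (\<lambda>t. e c (pi t)) ` {t. t < n \<and> t \<noteq> Q \<and> M (e c (pi t))}"
      then obtain t where t: "p = e c (pi t)" "t < n" "t \<noteq> Q" "M (e c (pi t))" by auto
      have "pi t \<noteq> cS" using piS[of t] t by auto
      then show "p \<in> {p \<in> {e c l |l. l < n \<and> l \<noteq> cS}. M p}" using t pir[of t] by auto
    qed
    have inj: "inj_on (\<lambda>t. e c (pi t)) {t. t < n \<and> t \<noteq> Q \<and> M (e c (pi t))}"
    proof (rule inj_onI)
      fix t1 t2 assume t: "t1 \<in> {t. t < n \<and> t \<noteq> Q \<and> M (e c (pi t))}" "t2 \<in> {t. t < n \<and> t \<noteq> Q \<and> M (e c (pi t))}"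
        "e c (pi t1) = e c (pi t2)"
      then have "pi t1 = pi t2" using e_inj[OF t(3)] by auto
      then show "t1 = t2" using pieq t by auto
    qed
    show ?thesis using cs[OF c] unfolding eq card_image[OF inj] .
  qed
  have Deq: "{p \<in> {e k l | k l. k < n \<and> k \<noteq> cD \<and> l < n \<and> l \<noteq> cD \<and> (k + l) mod n = (a + pi t) mod n} \<union> {e cS cD}. M p}
      = {p. (p = e a (pi t) \<and> (a \<noteq> cD \<and> pi t \<noteq> cD) \<or> p = e b (pi (Suc t mod n)) \<and> (b \<noteq> cD \<and> pi (Suc t mod n) \<noteq> cD)
             \<or> p = e cS cD) \<and> M p}" if t: "t < n" for t
  proof (rule set_eqI, rule iffI)
    fix p assume "p \<in> {p \<in> {e k l | k l. k < n \<and> k \<noteq> cD \<and> l < n \<and> l \<noteq> cD \<and> (k + l) mod n = (a + pi t) mod n} \<union> {e cS cD}. M p}"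
    then have "p = e cS cD \<and> M p \<or> (\<exists>k l. p = e k l \<and> k < n \<and> k \<noteq> cD \<and> l < n \<and> l \<noteq> cD \<and> (k + l) mod n = (a + pi t) mod n \<and> M p)"
      by blast
    then show "p \<in> {p. (p = e a (pi t) \<and> (a \<noteq> cD \<and> pi t \<noteq> cD) \<or> p = e b (pi (Suc t mod n)) \<and> (b \<noteq> cD \<and> pi (Suc t mod n) \<noteq> cD)
             \<or> p = e cS cD) \<and> M p}"
    proof
      assume "p = e cS cD \<and> M p" then show ?thesis by auto
    next
      assume "\<exists>k l. p = e k l \<and> k < n \<and> k \<noteq> cD \<and> l < n \<and> l \<noteq> cD \<and> (k + l) mod n = (a + pi t) mod n \<and> M p"
      then obtain k l where kl: "p = e k l" "k < n" "k \<noteq> cD" "l < n" "l \<noteq> cD" "(k + l) mod n = (a + pi t) mod n" "M p"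
        by blast
      have st: "Suc t mod n < n" using t by simp
      have ps: "(b + pi (Suc t mod n)) mod n = (a + pi t) mod n" by (rule pistep[OF t])
      have "k = a \<or> k = b \<or> l = a \<or> l = b" using supp kl by auto
      moreover have ?thesis if "k = a"
      proof -
        have "l = pi t" using mod_cancel[of l n "pi t" a] kl that pir[OF t] by simp
        then show ?thesis using kl that by auto
      qed
      moreover have ?thesis if "k = b"
      proof -
        have "l = pi (Suc t mod n)" using mod_cancel[of l n "pi (Suc t mod n)" b] kl that pir[OF st] ps by simp
        then show ?thesis using kl that by auto
      qed
      moreover have ?thesis if "l = a"
      proof -
        have "k = pi t" using mod_cancel[of k n "pi t" a] kl that pir[OF t] by (simp add: add.commute)
        then show ?thesis using kl that e_sym by auto
      qed
      moreover have ?thesis if "l = b"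
      proof -
        have "k = pi (Suc t mod n)" using mod_cancel[of k n "pi (Suc t mod n)" b] kl that pir[OF st] ps
          by (simp add: add.commute)
        then show ?thesis using kl that e_sym by auto
      qed
      ultimately show ?thesis by blast
    qed
  next
    fix p assume p: "p \<in> {p. (p = e a (pi t) \<and> (a \<noteq> cD \<and> pi t \<noteq> cD) \<or> p = e b (pi (Suc t mod n)) \<and> (b \<noteq> cD \<and> pi (Suc t mod n) \<noteq> cD)
             \<or> p = e cS cD) \<and> M p}"
    have st: "Suc t mod n < n" using t by simp
    have ps: "(b + pi (Suc t mod n)) mod n = (a + pi t) mod n" by (rule pistep[OF t])
    show "p \<in> {p \<in> {e k l | k l. k < n \<and> k \<noteq> cD \<and> l < n \<and> l \<noteq> cD \<and> (k + l) mod n = (a + pi t) mod n} \<union> {e cS cD}. M p}"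
      using p ab pir[OF t] pir[OF st] ps by blast
  qed
  show ?thesis unfolding f_def[symmetric] g_def[symmetric]
  proof (rule half.intro)
    show "5 \<le> n" "P < n" "Q < n" "P \<noteq> Q" by (fact n5 PQ PneQ)+
    show "f 0 = g 1" unfolding f_def g_def using pi0 pi1 e_sym by simp
  next
    fix t assume t: "t < n" "t \<noteq> 0" "t \<noteq> 1" "t \<noteq> P" "t \<noteq> Q"
    define h where "h = pi t"
    have h: "h < n" "h \<noteq> a" "h \<noteq> b" "h \<noteq> cS" "h \<noteq> cD"
      using t pir pia pib piS piD unfolding h_def by auto
    have hn: "h < n - 2" using cSD(4) h by auto
    have eq: "{p \<in> {e h l | l. l < n \<and> l \<noteq> cS}. M p} = {p. (p = e h a \<and> a \<noteq> cS \<or> p = e h b \<and> b \<noteq> cS) \<and> M p}"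
    proof (rule set_eqI, rule iffI)
      fix p assume "p \<in> {p \<in> {e h l | l. l < n \<and> l \<noteq> cS}. M p}"
      then obtain l where l: "p = e h l" "l < n" "l \<noteq> cS" "M p" by auto
      then have "l = a \<or> l = b" using supp[of h l] h by auto
      then show "p \<in> {p. (p = e h a \<and> a \<noteq> cS \<or> p = e h b \<and> b \<noteq> cS) \<and> M p}" using l by auto
    next
      fix p assume "p \<in> {p. (p = e h a \<and> a \<noteq> cS \<or> p = e h b \<and> b \<noteq> cS) \<and> M p}"
      then show "p \<in> {p \<in> {e h l | l. l < n \<and> l \<noteq> cS}. M p}" using ab by auto
    qed
    have ne: "e h a \<noteq> e h b" using e_inj[of h a h b] ab h by auto
    have "(a \<noteq> cS \<and> M (e h a)) = (b \<noteq> cS \<and> M (e h b))"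
      using cs[OF hn] unfolding eq using par2[of "a \<noteq> cS" "b \<noteq> cS" "e h a" "e h b" M] ne by simp
    then show "(Q \<noteq> 1 \<and> f t) = (Q \<noteq> 0 \<and> g t)" unfolding f_def g_def h_def using aS bS e_sym by simp
  next
    show "even (card {t. t < n \<and> t \<noteq> Q \<and> f t})" if "1 \<noteq> P" "1 \<noteq> Q"
    proof -
      have "a < n - 2" using cSD(4)[of a] ab that aS aD by auto
      then show ?thesis using sumS[of a] unfolding f_def by simp
    qed
  next
    show "even (card {t. t < n \<and> t \<noteq> Q \<and> g t})" if "0 \<noteq> P" "0 \<noteq> Q"
    proof -
      have "b < n - 2" using cSD(4)[of b] ab that bS bD by auto
      then show ?thesis using sumS[of b] unfolding g_def by simp
    qed
  next
    show "(P \<noteq> 0 \<and> P \<noteq> 1 \<and> f 0) = xv P Q f g"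
    proof -
      have s1: "Suc 0 mod n = 1" using n5 by simp
      have "{p. (p = e a (pi 0) \<and> (a \<noteq> cD \<and> pi 0 \<noteq> cD) \<or> p = e b (pi (Suc 0 mod n)) \<and> (b \<noteq> cD \<and> pi (Suc 0 mod n) \<noteq> cD)
             \<or> p = e cS cD) \<and> M p} = {p. (p = e a b \<and> (a \<noteq> cD \<and> b \<noteq> cD) \<or> p = e cS cD \<and> True) \<and> M p}"
        unfolding s1 pi0 pi1 using e_sym by auto
      moreover have "even (card {p \<in> {e k l | k l. k < n \<and> k \<noteq> cD \<and> l < n \<and> l \<noteq> cD \<and> (k + l) mod n = (a + pi 0) mod n} \<union> {e cS cD}. M p})"
        using cd[of "(a + pi 0) mod n"] n5 by simp
      ultimately have ev: "even (card {p. (p = e a b \<and> (a \<noteq> cD \<and> b \<noteq> cD) \<or> p = e cS cD \<and> True) \<and> M p})"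
        using Deq[of 0] n5 by simp
      have ne: "a \<noteq> cD \<and> b \<noteq> cD \<Longrightarrow> e a b \<noteq> e cS cD" using e_inj[of a b cS cD] by auto
      have "((a \<noteq> cD \<and> b \<noteq> cD) \<and> M (e a b)) = M (e cS cD)"
        using ev par2[of "a \<noteq> cD \<and> b \<noteq> cD" True "e a b" "e cS cD" M] ne by simp
      then show ?thesis unfolding wX[symmetric] unfolding f_def using aD bD pi0 by auto
    qed
  next
    fix t assume t: "1 \<le> t" "t < n"
    show "((t \<noteq> P \<and> P \<noteq> 1 \<and> f t) \<noteq> (Suc t mod n \<noteq> P \<and> P \<noteq> 0 \<and> g (Suc t mod n))) = xv P Q f g"
    proof -
      have st: "Suc t mod n < n" using t by simp
      have ev: "even (card {p. (p = e a (pi t) \<and> (a \<noteq> cD \<and> pi t \<noteq> cD) \<or> p = e b (pi (Suc t mod n)) \<and> (b \<noteq> cD \<and> pi (Suc t mod n) \<noteq> cD)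
             \<or> p = e cS cD) \<and> M p})"
        using cd[of "(a + pi t) mod n"] Deq[of t] t n5 by simp
      have n1: "e a (pi t) \<noteq> e b (pi (Suc t mod n))"
      proof
        assume "e a (pi t) = e b (pi (Suc t mod n))"
        then have "pi t = b" using e_inj ab by blast
        then show False using pib[of t] t by simp
      qed
      have n2: "a \<noteq> cD \<and> pi t \<noteq> cD \<Longrightarrow> e a (pi t) \<noteq> e cS cD" using e_inj[of a "pi t" cS cD] by auto
      have n3: "b \<noteq> cD \<and> pi (Suc t mod n) \<noteq> cD \<Longrightarrow> e b (pi (Suc t mod n)) \<noteq> e cS cD"
        using e_inj[of b "pi (Suc t mod n)" cS cD] by auto
      have "(((a \<noteq> cD \<and> pi t \<noteq> cD) \<and> M (e a (pi t))) \<noteq> ((b \<noteq> cD \<and> pi (Suc t mod n) \<noteq> cD) \<and> M (e b (pi (Suc t mod n))))) = M (e cS cD)"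
        using par3[of "a \<noteq> cD \<and> pi t \<noteq> cD" "b \<noteq> cD \<and> pi (Suc t mod n) \<noteq> cD" "e a (pi t)" "e b (pi (Suc t mod n))" "e cS cD" M]
          n1 n2 n3 ev by blast
      moreover have "(a \<noteq> cD \<and> pi t \<noteq> cD) = (t \<noteq> P \<and> P \<noteq> 1)" using aD piD[of t] t by auto
      moreover have "(b \<noteq> cD \<and> pi (Suc t mod n) \<noteq> cD) = (Suc t mod n \<noteq> P \<and> P \<noteq> 0)" using bD piD[OF st] by auto
      ultimately show ?thesis unfolding wX[symmetric] unfolding f_def g_def by simp
    qed
  qed
qed

lemma edge_down_sym: "edge_down x y = edge_down y x" by (auto simp: edge_down_def)
lemma edge_up_sym: "edge_up x y = edge_up y x" by (auto simp: edge_up_def)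
lemma edge_down_inj: "edge_down x y = edge_down x' y' \<Longrightarrow> (x = x' \<and> y = y') \<or> (x = y' \<and> y = x')"
  by (auto simp: edge_down_def max_def min_def split: if_splits)
lemma edge_up_inj: "edge_up x y = edge_up x' y' \<Longrightarrow> (x = x' \<and> y = y') \<or> (x = y' \<and> y = x')"
  by (auto simp: edge_up_def max_def min_def split: if_splits)

lemma pi_props:
  fixes n a b d :: nat and pf :: "nat \<Rightarrow> nat"
  assumes pr: "prime n" and ab: "a < n" "b < n" "a \<noteq> b"
  and d_def: "d = (a + n - b) mod n"
  and pf_def: "pf = (\<lambda>t. (b + t * d) mod n)"
  shows "\<And>t. pf t < n" "inj_on pf {..<n}" "\<And>l. l < n \<Longrightarrow> \<exists>t<n. pf t = l"
    "pf 0 = b" "pf 1 = a" "\<And>t. (b + pf (Suc t mod n)) mod n = (a + pf t) mod n"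
proof -
  have n0: "0 < n" using ab by simp
  show pr0: "\<And>t. pf t < n" unfolding pf_def using n0 by simp
  show "pf 0 = b" unfolding pf_def using ab by simp
  show "pf 1 = a"
  proof -
    have "pf 1 = (b + (a + n - b) mod n) mod n" unfolding pf_def d_def by simp
    also have "\<dots> = (b + (a + n - b)) mod n" by (simp add: mod_add_right_eq)
    also have "b + (a + n - b) = a + n" using ab by simp
    finally show ?thesis using ab by simp
  qed
  show "\<And>t. (b + pf (Suc t mod n)) mod n = (a + pf t) mod n"
  proof -
    fix t
    have m1: "(Suc t mod n * d) mod n = (Suc t * d) mod n" by (simp add: mod_mult_left_eq)
    have "(b + pf (Suc t mod n)) mod n = (b + (b + Suc t mod n * d)) mod n"
      unfolding pf_def by (simp add: mod_add_right_eq)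
    also have "\<dots> = ((b + b) + (Suc t mod n * d) mod n) mod n" by (metis add.assoc mod_add_right_eq)
    also have "\<dots> = ((b + b) + (Suc t * d) mod n) mod n" using m1 by simp
    also have "\<dots> = (b + b + Suc t * d) mod n" by (simp add: mod_add_right_eq)
    also have "\<dots> = (b + b + t * d + d) mod n" by (simp add: algebra_simps)
    also have "\<dots> = (b + b + t * d + (a + n - b)) mod n"
      using mod_add_right_eq[of "b + b + t * d" "a + n - b" n] unfolding d_def[symmetric] by simp
    also have "\<dots> = (a + b + t * d + n) mod n" using ab by (simp add: algebra_simps)
    also have "\<dots> = (a + b + t * d) mod n" by simp
    also have "\<dots> = (a + pf t) mod n" unfolding pf_def by (simp only: mod_add_right_eq add.assoc)
    finally show "(b + pf (Suc t mod n)) mod n = (a + pf t) mod n" .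
  qed
  have dpos: "0 < d" "d < n"
  proof -
    show "d < n" unfolding d_def using n0 by simp
    show "0 < d"
    proof (rule ccontr)
      assume "\<not> 0 < d"
      then have "n dvd a + n - b" unfolding d_def by auto
      moreover have "0 < a + n - b" "a + n - b < 2 * n" "a + n - b \<noteq> n" using ab by auto
      moreover obtain k where k0: "a + n - b = n * k" using calculation(1) by (auto elim!: dvdE)
      ultimately have k: "a + n - b = n * k" "0 < n * k" "n * k < 2 * n" "n * k \<noteq> n" by auto
      then have "0 < k" "k < 2" by (auto simp: mult.commute)
      then have "k = 1" by simp
      then show False using k by simp
    qed
  qed
  show inj: "inj_on pf {..<n}"
  proof (rule inj_onI)
    fix x y assume xy: "x \<in> {..<n}" "y \<in> {..<n}" "pf x = pf y"
    have *: "x = y" if "x < n" "y < n" "(b + x * d) mod n = (b + y * d) mod n" "x \<le> y" for x y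
    proof -
      have "n dvd (b + y * d) - (b + x * d)" using that mod_eq_dvd_iff_nat[of "b + x * d" "b + y * d" n] by simp
      then have "n dvd (y - x) * d" by (simp add: diff_mult_distrib)
      then have "n dvd (y - x) \<or> n dvd d" using pr prime_dvd_mult_nat by blast
      moreover have "\<not> n dvd d"
      proof
        assume "n dvd d"
        then have "n \<le> d" using dpos(1) by (rule dvd_imp_le)
        then show False using dpos(2) by simp
      qed
      ultimately have dv: "n dvd (y - x)" by blast
      show "x = y"
      proof (rule ccontr)
        assume "x \<noteq> y"
        then have "0 < y - x" using that by simp
        then have "n \<le> y - x" using dv by (simp add: dvd_imp_le)
        then show False using that by simp
      qed
    qed
    have xy': "x < n" "y < n" "(b + x * d) mod n = (b + y * d) mod n" using xy unfolding pf_def by auto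
    show "x = y"
    proof (cases "x \<le> y")
      case True then show ?thesis using *[of x y] xy' by blast
    next
      case False then show ?thesis using *[of y x] xy' by auto
    qed
  qed
  have sub: "pf ` {..<n} \<subseteq> {..<n}" using pr0 by auto
  have "pf ` {..<n} = {..<n}" using endo_inj_surj[OF finite_lessThan sub inj] .
  then show "\<And>l. l < n \<Longrightarrow> \<exists>t<n. pf t = l" by (metis imageE lessThan_iff)
qed

lemma core:
  assumes pr: "prime n" "5 \<le> n" and ab: "a < n" "b < n" "a \<noteq> b" and L: "L \<in> code_G4 n"
    and supp: "\<And>i j. L i j \<Longrightarrow> i = a \<or> i = b \<or> j = a \<or> j = b"
  shows "\<not> L i j"
proof -
  define d where "d = (a + n - b) mod n"
  define pf where "pf = (\<lambda>t. (b + t * d) mod n)"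
  note pp = pi_props[OF pr(1) ab d_def pf_def]
  obtain P where P: "P < n" "pf P = n - 2" using pp(3)[of "n - 2"] pr by auto
  obtain Q where Q: "Q < n" "pf Q = n - 1" using pp(3)[of "n - 1"] pr by auto
  define M where "M = (\<lambda>p. L (fst p) (snd p))"
  have Lc: "\<forall>h < n - 2. parity_zero L (S_down n h)" "\<forall>m < n. parity_zero L (D_down n m)"
      "\<forall>h < n - 2. parity_zero L (S_up n h)" "\<forall>m < n. parity_zero L (D_up n m)"
    using L unfolding code_G4_def by auto
  have hD: "half n P Q (\<lambda>t. M (edge_down a (pf t))) (\<lambda>t. M (edge_down b (pf t)))"
  proof (rule half_from_edges[where cS = "n - 1" and cD = "n - 2"])
    show "\<And>x y. M (edge_down x y) \<Longrightarrow> x = a \<or> x = b \<or> y = a \<or> y = b"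
      unfolding M_def edge_down_def using supp by (auto simp: max_def min_def split: if_splits)
    show "\<And>h. h < n - 2 \<Longrightarrow> even (card {p \<in> {edge_down h l | l. l < n \<and> l \<noteq> n - 1}. M p})"
    proof -
      fix h assume "h < n - 2"
      then have "parity_zero L (S_down n h)" using Lc by auto
      moreover have "S_down n h = {edge_down h l | l. l < n \<and> l \<noteq> n - 1}"
        unfolding S_down_def using pr by (auto; linarith)
      ultimately show "even (card {p \<in> {edge_down h l | l. l < n \<and> l \<noteq> n - 1}. M p})"
        unfolding parity_zero_def M_def by simp
    qed
    show "\<And>m. m < n \<Longrightarrow> even (card {p \<in> {edge_down k l | k l. k < n \<and> k \<noteq> n - 2 \<and> l < n \<and> l \<noteq> n - 2 \<and> (k + l) mod n = m} \<union> {edge_down (n - 1) (n - 2)}. M p})"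
    proof -
      fix m assume "m < n"
      then have "parity_zero L (D_down n m)" using Lc by auto
      moreover have "edge_down (n - 1) (n - 2) = (n - 1, n - 2)" by (simp add: edge_down_def)
      ultimately show "even (card {p \<in> {edge_down k l | k l. k < n \<and> k \<noteq> n - 2 \<and> l < n \<and> l \<noteq> n - 2 \<and> (k + l) mod n = m} \<union> {edge_down (n - 1) (n - 2)}. M p})"
        unfolding parity_zero_def M_def D_down_def by simp
    qed
  qed (use pr ab pp P Q edge_down_sym edge_down_inj in auto)
  have hU: "half n Q P (\<lambda>t. M (edge_up a (pf t))) (\<lambda>t. M (edge_up b (pf t)))"
  proof (rule half_from_edges[where cS = "n - 2" and cD = "n - 1"])
    show "\<And>x y. M (edge_up x y) \<Longrightarrow> x = a \<or> x = b \<or> y = a \<or> y = b"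
      unfolding M_def edge_up_def using supp by (auto simp: max_def min_def split: if_splits)
    show "\<And>h. h < n - 2 \<Longrightarrow> even (card {p \<in> {edge_up h l | l. l < n \<and> l \<noteq> n - 2}. M p})"
    proof -
      fix h assume "h < n - 2"
      then have "parity_zero L (S_up n h)" using Lc by auto
      then show "even (card {p \<in> {edge_up h l | l. l < n \<and> l \<noteq> n - 2}. M p})"
        unfolding parity_zero_def M_def S_up_def by simp
    qed
    show "\<And>m. m < n \<Longrightarrow> even (card {p \<in> {edge_up k l | k l. k < n \<and> k \<noteq> n - 1 \<and> l < n \<and> l \<noteq> n - 1 \<and> (k + l) mod n = m} \<union> {edge_up (n - 2) (n - 1)}. M p})"
    proof -
      fix m assume "m < n"
      then have "parity_zero L (D_up n m)" using Lc by auto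
      moreover have "edge_up (n - 2) (n - 1) = (n - 2, n - 1)" by (simp add: edge_up_def)
      moreover have "{edge_up k l | k l. k < n \<and> k \<noteq> n - 1 \<and> l < n \<and> l \<noteq> n - 1 \<and> (k + l) mod n = m}
          = {edge_up k l | k l. k < n - 1 \<and> l < n - 1 \<and> (k + l) mod n = m}"
      proof -
        have kk: "\<And>k::nat. k < n - 1 \<longleftrightarrow> (k < n \<and> k \<noteq> n - 1)" using pr by auto
        show ?thesis unfolding kk by blast
      qed
      ultimately show "even (card {p \<in> {edge_up k l | k l. k < n \<and> k \<noteq> n - 1 \<and> l < n \<and> l \<noteq> n - 1 \<and> (k + l) mod n = m} \<union> {edge_up (n - 2) (n - 1)}. M p})"
        unfolding parity_zero_def M_def D_up_def by simp
    qed
  qed (use pr ab pp P Q edge_up_sym edge_up_inj in auto)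
  have z: "\<not> M (edge_down a (pf t)) \<and> \<not> M (edge_down b (pf t)) \<and> \<not> M (edge_up a (pf t)) \<and> \<not> M (edge_up b (pf t))"
    if "t < n" for t
    by (rule halves_zero[OF hD hU _ _ that]) (use pp(4) pp(5) in \<open>simp_all add: M_def edge_down_def edge_up_def\<close>)
  show "\<not> L i j"
  proof
    assume Lij: "L i j"
    have ij: "i < n" "j < n" using L Lij unfolding code_G4_def binary_graphs_def by auto
    show False
    proof (cases "i = a \<or> i = b")
      case True
      obtain t where t: "t < n" "pf t = j" using pp(3)[OF ij(2)] by auto
      have "edge_down i j = (i, j) \<or> edge_up i j = (i, j)" by (auto simp: edge_down_def edge_up_def)
      then show False using z[OF t(1)] True Lij t unfolding M_def by auto
    next
      case False
      then have j: "j = a \<or> j = b" using supp[OF Lij] by auto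
      obtain t where t: "t < n" "pf t = i" using pp(3)[OF ij(1)] by auto
      have "edge_down j i = (i, j) \<or> edge_up j i = (i, j)" by (auto simp: edge_down_def edge_up_def)
      then show False using z[OF t(1)] j Lij t unfolding M_def by auto
    qed
  qed
qed



lemma card_split2: "finite a \<Longrightarrow> card a = card (a - b) + card (a \<inter> b)"
proof -
  assume fa: "finite a"
  have "a = (a - b) \<union> (a \<inter> b)" by blast
  then have "card a = card ((a - b) \<union> (a \<inter> b))" by simp
  also have "\<dots> = card (a - b) + card (a \<inter> b)" by (rule card_Un_disjoint) (use fa in auto)
  finally show ?thesis .
qed

lemma par_symdiff:
  assumes "finite S"
  shows "even (card (S \<inter> ((A - B) \<union> (B - A)))) \<longleftrightarrow> (even (card (S \<inter> A)) \<longleftrightarrow> even (card (S \<inter> B)))"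
proof -
  define a where "a = S \<inter> A"
  define b where "b = S \<inter> B"
  have fa: "finite a" "finite b" using assms unfolding a_def b_def by auto
  have eq: "S \<inter> ((A - B) \<union> (B - A)) = (a - b) \<union> (b - a)" unfolding a_def b_def by blast
  have c1: "card ((a - b) \<union> (b - a)) = card (a - b) + card (b - a)"
    by (rule card_Un_disjoint) (use fa in auto)
  have c2: "card a = card (a - b) + card (a \<inter> b)" using card_split2[OF fa(1)] .
  have c3: "card b = card (b - a) + card (a \<inter> b)" using card_split2[OF fa(2), of a] by (simp add: Int_commute)
  show ?thesis unfolding eq a_def[symmetric] b_def[symmetric] c1 using c2 c3 by presburger
qed

lemma pz_set: "parity_zero L S \<longleftrightarrow> even (card (S \<inter> {p. L (fst p) (snd p)}))"
  unfolding parity_zero_def by (simp add: Int_def)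

lemma fin_S_down: "finite (S_down n h)"
proof -
  have "S_down n h = (\<lambda>l. edge_down h l) ` {..<n - 1}" unfolding S_down_def by auto
  then show ?thesis by simp
qed

lemma fin_S_up: "finite (S_up n h)"
proof -
  have "S_up n h \<subseteq> (\<lambda>l. edge_up h l) ` {..<n}" unfolding S_up_def by auto
  then show ?thesis by (rule finite_subset) simp
qed

lemma fin_D_down: "finite (D_down n m)"
proof -
  have "D_down n m \<subseteq> ({..<n} \<times> {..<n}) \<union> {(n - 1, n - 2)}"
    unfolding D_down_def by (auto simp: edge_down_def max_def min_def)
  then show ?thesis by (rule finite_subset) simp
qed

lemma fin_D_up: "finite (D_up n m)"
proof -
  have "D_up n m \<subseteq> ({..<n} \<times> {..<n}) \<union> {(n - 2, n - 1)}"
    unfolding D_up_def by (auto simp: edge_up_def max_def min_def)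
  then show ?thesis by (rule finite_subset) simp
qed

lemma pz_xor:
  assumes "finite S" "parity_zero L1 S" "parity_zero L2 S"
  shows "parity_zero (\<lambda>i j. L1 i j \<noteq> L2 i j) S"
proof -
  define A where "A = {p. L1 (fst p) (snd p)}"
  define B where "B = {p. L2 (fst p) (snd p)}"
  have "{p. L1 (fst p) (snd p) \<noteq> L2 (fst p) (snd p)} = (A - B) \<union> (B - A)" unfolding A_def B_def by auto
  then show ?thesis using assms par_symdiff[OF assms(1), of A B] unfolding pz_set A_def B_def by simp
qed

lemma code_xor:
  assumes "L1 \<in> code_G4 n" "L2 \<in> code_G4 n"
  shows "(\<lambda>i j. L1 i j \<noteq> L2 i j) \<in> code_G4 n"
proof -
  have b: "L1 \<in> binary_graphs n" "L2 \<in> binary_graphs n" using assms unfolding code_G4_def by auto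
  have "(\<lambda>i j. L1 i j \<noteq> L2 i j) \<in> binary_graphs n" using b unfolding binary_graphs_def by auto
  moreover have "\<forall>h < n - 2. parity_zero (\<lambda>i j. L1 i j \<noteq> L2 i j) (S_down n h)"
    using assms unfolding code_G4_def using pz_xor[OF fin_S_down] by blast
  moreover have "\<forall>m < n. parity_zero (\<lambda>i j. L1 i j \<noteq> L2 i j) (D_down n m)"
    using assms unfolding code_G4_def using pz_xor[OF fin_D_down] by blast
  moreover have "\<forall>h < n - 2. parity_zero (\<lambda>i j. L1 i j \<noteq> L2 i j) (S_up n h)"
    using assms unfolding code_G4_def using pz_xor[OF fin_S_up] by blast
  moreover have "\<forall>m < n. parity_zero (\<lambda>i j. L1 i j \<noteq> L2 i j) (D_up n m)"
    using assms unfolding code_G4_def using pz_xor[OF fin_D_up] by blast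
  ultimately show ?thesis unfolding code_G4_def by blast
qed

lemma erasure:
  assumes "prime n" "5 \<le> n"
  shows "node_erasure_correcting n 2 (code_G4 n)"
  unfolding node_erasure_correcting_def
proof (intro allI impI ballI)
  fix F L1 L2
  assume F: "F \<subseteq> {..<n} \<and> card F = 2" and L1: "L1 \<in> code_G4 n" and L2: "L2 \<in> code_G4 n"
    and agree: "\<forall>i<n. \<forall>j<n. i \<notin> F \<and> j \<notin> F \<longrightarrow> L1 i j = L2 i j"
  obtain a b where ab: "F = {a, b}" "a \<noteq> b" using F by (auto simp: card_2_iff)
  have abn: "a < n" "b < n" using F ab by auto
  define L where "L = (\<lambda>i j. L1 i j \<noteq> L2 i j)"
  have LC: "L \<in> code_G4 n" unfolding L_def by (rule code_xor[OF L1 L2])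
  have supp: "i = a \<or> i = b \<or> j = a \<or> j = b" if "L i j" for i j
  proof (cases "i < n \<and> j < n")
    case True then show ?thesis using agree that ab unfolding L_def by auto
  next
    case False then show ?thesis using LC that unfolding code_G4_def binary_graphs_def by auto
  qed
  have "\<not> L i j" for i j using core[OF assms abn ab(2) LC supp] .
  then show "L1 = L2" unfolding L_def by (intro ext) auto
qed

definition cset :: "nat \<Rightarrow> nat \<times> nat \<Rightarrow> (nat \<times> nat) set" where
  "cset n c = (if fst c = 0 then S_down n (snd c) else if fst c = 1 then D_down n (snd c)
      else if fst c = 2 then S_up n (snd c) else D_up n (snd c))"

definition cidx :: "nat \<Rightarrow> (nat \<times> nat) set" where
  "cidx n = ({0, 2} \<times> {..<n - 2}) \<union> ({1, 3} \<times> {..<n})"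

lemma fin_cset: "finite (cset n c)"
  unfolding cset_def using fin_S_down fin_S_up fin_D_down fin_D_up by auto

lemma card_cidx: "2 \<le> n \<Longrightarrow> card (cidx n) = 4 * n - 4"
proof -
  assume n2: "2 \<le> n"
  have "card (cidx n) = card ({0::nat, 2} \<times> {..<n - 2}) + card ({1::nat, 3} \<times> {..<n})"
    unfolding cidx_def by (rule card_Un_disjoint) auto
  also have "\<dots> = 2 * (n - 2) + 2 * n" by (simp add: card_cartesian_product)
  also have "\<dots> = 4 * n - 4" using n2 by simp
  finally show ?thesis .
qed

lemma code_set:
  assumes "X \<subseteq> {..<n} \<times> {..<n}"
  shows "(\<lambda>i j. (i, j) \<in> X) \<in> code_G4 n \<longleftrightarrow> (\<forall>c \<in> cidx n. even (card (cset n c \<inter> X)))"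
proof -
  have pz: "parity_zero (\<lambda>i j. (i, j) \<in> X) S \<longleftrightarrow> even (card (S \<inter> X))" for S
    unfolding pz_set by simp
  have bg: "(\<lambda>i j. (i, j) \<in> X) \<in> binary_graphs n" using assms unfolding binary_graphs_def by auto
  have "(\<forall>c \<in> cidx n. even (card (cset n c \<inter> X))) \<longleftrightarrow>
     (\<forall>h < n - 2. even (card (S_down n h \<inter> X))) \<and> (\<forall>m < n. even (card (D_down n m \<inter> X))) \<and>
     (\<forall>h < n - 2. even (card (S_up n h \<inter> X))) \<and> (\<forall>m < n. even (card (D_up n m \<inter> X)))"
  proof
    assume H: "\<forall>c \<in> cidx n. even (card (cset n c \<inter> X))"
    have "even (card (S_down n h \<inter> X))" if "h < n - 2" for h
      using H[rule_format, of "(0, h)"] that unfolding cidx_def cset_def by simp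
    moreover have "even (card (D_down n h \<inter> X))" if "h < n" for h
      using H[rule_format, of "(1, h)"] that unfolding cidx_def cset_def by simp
    moreover have "even (card (S_up n h \<inter> X))" if "h < n - 2" for h
      using H[rule_format, of "(2, h)"] that unfolding cidx_def cset_def by simp
    moreover have "even (card (D_up n h \<inter> X))" if "h < n" for h
      using H[rule_format, of "(3, h)"] that unfolding cidx_def cset_def by simp
    ultimately show "(\<forall>h < n - 2. even (card (S_down n h \<inter> X))) \<and> (\<forall>m < n. even (card (D_down n m \<inter> X))) \<and>
     (\<forall>h < n - 2. even (card (S_up n h \<inter> X))) \<and> (\<forall>m < n. even (card (D_up n m \<inter> X)))" by blast
  next
    assume H: "(\<forall>h < n - 2. even (card (S_down n h \<inter> X))) \<and> (\<forall>m < n. even (card (D_down n m \<inter> X))) \<and>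
     (\<forall>h < n - 2. even (card (S_up n h \<inter> X))) \<and> (\<forall>m < n. even (card (D_up n m \<inter> X)))"
    show "\<forall>c \<in> cidx n. even (card (cset n c \<inter> X))"
    proof
      fix c assume "c \<in> cidx n"
      then obtain k h where c: "c = (k, h)" "(k = 0 \<or> k = 2) \<and> h < n - 2 \<or> (k = 1 \<or> k = 3) \<and> h < n"
        unfolding cidx_def by auto
      from c(2) consider "k = 0" "h < n - 2" | "k = 2" "h < n - 2" | "k = 1" "h < n" | "k = 3" "h < n" by blast
      then show "even (card (cset n c \<inter> X))"
      proof cases
        case 1 then show ?thesis using H c(1) unfolding cset_def by simp
      next
        case 2 then show ?thesis using H c(1) unfolding cset_def by simp
      next
        case 3 then show ?thesis using H c(1) unfolding cset_def by simp
      next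
        case 4 then show ?thesis using H c(1) unfolding cset_def by simp
      qed
    qed
  qed
  moreover have "(\<lambda>i j. (i, j) \<in> X) \<in> code_G4 n \<longleftrightarrow>
     (\<forall>h < n - 2. even (card (S_down n h \<inter> X))) \<and> (\<forall>m < n. even (card (D_down n m \<inter> X))) \<and>
     (\<forall>h < n - 2. even (card (S_up n h \<inter> X))) \<and> (\<forall>m < n. even (card (D_up n m \<inter> X)))"
    using bg by (simp add: code_G4_def pz)
  ultimately show ?thesis by simp
qed

lemma card_code:
  assumes pr: "prime n" "5 \<le> n"
  shows "card (code_G4 n) = 2 ^ ((n - 2) * (n - 2))"
proof -
  define F where "F = {n - 2, n - 1}"
  define A where "A = {..<n} - F"
  define R where "R = A \<times> A"
  define E where "E = ({..<n} \<times> {..<n}) - R"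
  define I where "I = cidx n"
  let ?G = "\<lambda>X. (\<lambda>i j. (i, j) \<in> X)"
  have Fs: "F \<subseteq> {..<n}" "card F = 2" using pr unfolding F_def by auto
  have fF: "finite F" unfolding F_def by simp
  have cA: "card A = n - 2" unfolding A_def using Fs card_Diff_subset[OF fF Fs(1)] by simp
  have cR: "card R = (n - 2) * (n - 2)" unfolding R_def by (simp add: card_cartesian_product cA)
  have Rsub: "R \<subseteq> {..<n} \<times> {..<n}" unfolding R_def A_def by auto
  have cE: "card E = 4 * n - 4"
  proof -
    have "card E = n * n - (n - 2) * (n - 2)" unfolding E_def
      using Rsub by (simp add: card_Diff_subset card_cartesian_product cR finite_subset)
    also have "\<dots> = 4 * n - 4"
    proof -
      have "n * n = (n - 2) * (n - 2) + (4 * n - 4)" using pr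
      proof -
        define k where "k = n - 2"
        have "n = k + 2" using pr unfolding k_def by simp
        then show ?thesis by (simp add: algebra_simps)
      qed
      then show ?thesis by simp
    qed
    finally show ?thesis .
  qed
  have cI: "card I = 4 * n - 4" unfolding I_def using card_cidx pr by simp
  have finE: "finite E" "finite I" "finite R" unfolding E_def I_def cidx_def R_def A_def by auto
  have Esupp: "i = n - 2 \<or> i = n - 1 \<or> j = n - 2 \<or> j = n - 1" if "(i, j) \<in> E" for i j
    using that unfolding E_def R_def A_def F_def by auto
  have ext: "\<exists>X \<subseteq> E. ?G (X \<union> Y) \<in> code_G4 n" if Y: "Y \<subseteq> R" for Y
  proof -
    define Phi where "Phi = (\<lambda>X. {c \<in> I. odd (card (cset n c \<inter> (X \<union> Y)))})"
    have inj: "inj_on Phi (Pow E)"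
    proof (rule inj_onI)
      fix X1 X2 assume X: "X1 \<in> Pow E" "X2 \<in> Pow E" "Phi X1 = Phi X2"
      define Z where "Z = (X1 - X2) \<union> (X2 - X1)"
      have ZE: "Z \<subseteq> E" using X unfolding Z_def by auto
      have ZU: "Z = ((X1 \<union> Y) - (X2 \<union> Y)) \<union> ((X2 \<union> Y) - (X1 \<union> Y))"
        using X Y unfolding Z_def E_def by auto
      have "\<forall>c \<in> cidx n. even (card (cset n c \<inter> Z))"
      proof
        fix c assume c: "c \<in> cidx n"
        have "(c \<in> Phi X1) = (c \<in> Phi X2)" using X by simp
        then have "(even (card (cset n c \<inter> (X1 \<union> Y)))) = (even (card (cset n c \<inter> (X2 \<union> Y))))"
          using c unfolding Phi_def I_def by auto
        then show "even (card (cset n c \<inter> Z))" unfolding ZU using par_symdiff[OF fin_cset] by blast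
      qed
      moreover have "Z \<subseteq> {..<n} \<times> {..<n}" using ZE unfolding E_def by auto
      ultimately have ZC: "?G Z \<in> code_G4 n" using code_set by blast
      have "\<not> ?G Z i j" for i j
      proof (rule core[OF pr _ _ _ ZC])
        show "n - 2 < n" "n - 1 < n" "n - 2 \<noteq> n - 1" using pr by auto
        show "\<And>i j. (i, j) \<in> Z \<Longrightarrow> i = n - 2 \<or> i = n - 1 \<or> j = n - 2 \<or> j = n - 1" using Esupp ZE by auto
      qed
      then have "Z = {}" by auto
      then show "X1 = X2" unfolding Z_def by auto
    qed
    have sub: "Phi ` Pow E \<subseteq> Pow I" unfolding Phi_def by auto
    have "card (Phi ` Pow E) = card (Pow I)"
      using card_image[OF inj] finE by (simp add: card_Pow cE cI)
    then have "Phi ` Pow E = Pow I" using sub finE by (intro card_subset_eq) auto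
    then have "{} \<in> Phi ` Pow E" by simp
    then obtain X where X: "X \<in> Pow E" "Phi X = {}" by (rule imageE) auto
    then have X: "X \<subseteq> E" "Phi X = {}" by auto
    have "X \<union> Y \<subseteq> {..<n} \<times> {..<n}" using X Y Rsub unfolding E_def by auto
    moreover have "\<forall>c \<in> cidx n. even (card (cset n c \<inter> (X \<union> Y)))"
      using X(2) unfolding Phi_def I_def by auto
    ultimately show ?thesis using X(1) code_set by blast
  qed
  define rho where "rho = (\<lambda>L. {p \<in> R. L (fst p) (snd p)})"
  have img: "rho ` code_G4 n = Pow R"
  proof
    show "rho ` code_G4 n \<subseteq> Pow R" unfolding rho_def by auto
    show "Pow R \<subseteq> rho ` code_G4 n"
    proof
      fix Y assume "Y \<in> Pow R"
      then have Y: "Y \<subseteq> R" by simp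
      obtain X where X: "X \<subseteq> E" "?G (X \<union> Y) \<in> code_G4 n" using ext[OF Y] by blast
      have "rho (?G (X \<union> Y)) = Y" using X Y unfolding rho_def E_def by auto
      then show "Y \<in> rho ` code_G4 n" using X by (metis imageI)
    qed
  qed
  have injr: "inj_on rho (code_G4 n)"
  proof (rule inj_onI)
    fix L1 L2 assume L: "L1 \<in> code_G4 n" "L2 \<in> code_G4 n" "rho L1 = rho L2"
    have "\<forall>i<n. \<forall>j<n. i \<notin> F \<and> j \<notin> F \<longrightarrow> L1 i j = L2 i j"
    proof (intro allI impI)
      fix i j assume ij: "i < n" "j < n" "i \<notin> F \<and> j \<notin> F"
      then have "(i, j) \<in> R" unfolding R_def A_def by auto
      then have "(i, j) \<in> rho L1 \<longleftrightarrow> L1 i j" "(i, j) \<in> rho L2 \<longleftrightarrow> L2 i j" unfolding rho_def by auto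
      then show "L1 i j = L2 i j" using L(3) by simp
    qed
    then show "L1 = L2" using erasure[OF pr] Fs L(1,2) unfolding node_erasure_correcting_def by blast
  qed
  have "card (code_G4 n) = card (Pow R)" using card_image[OF injr] img by simp
  also have "\<dots> = 2 ^ ((n - 2) * (n - 2))" using finE by (simp add: card_Pow cR)
  finally show ?thesis .
qed

theorem theorem3:
  fixes n :: nat
  assumes "prime n" and "n \<ge> 5"
  shows "optimal_node_erasure_code n 2 (code_G4 n) \<and>
         node_erasure_correcting n 2 (code_G4 n) \<and>
         redundancy n (code_G4 n) = real (4 * n - 4)"
proof -
  have pr: "prime n" "5 \<le> n" using assms by auto
  have E: "node_erasure_correcting n 2 (code_G4 n)" by (rule erasure[OF pr])
  have cc: "card (code_G4 n) = 2 ^ ((n - 2) * (n - 2))" by (rule card_code[OF pr])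
  have red: "redundancy n (code_G4 n) = real (n ^ 2) - real ((n - 2) ^ 2)"
  proof -
    have "real (card (code_G4 n)) = (2::real) ^ ((n - 2) * (n - 2))" unfolding cc by simp
    then have "code_dimension (code_G4 n) = real ((n - 2) * (n - 2))"
      unfolding code_dimension_def by simp
    then show ?thesis unfolding redundancy_def by (simp add: power2_eq_square)
  qed
  have nn: "n ^ 2 = (n - 2) ^ 2 + (4 * n - 4)"
  proof -
    define k where "k = n - 2"
    have "n = k + 2" using pr unfolding k_def by simp
    then show ?thesis unfolding k_def[symmetric] by (simp add: power2_eq_square algebra_simps)
  qed
  have red2: "real (n ^ 2) - real ((n - 2) ^ 2) = real (4 * n - 4)"
    using nn by (metis add_diff_cancel_left' of_nat_add)
  have sub: "code_G4 n \<subseteq> binary_graphs n" unfolding code_G4_def by auto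
  show ?thesis using E red red2 sub unfolding optimal_node_erasure_code_def by simp
qed

end
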